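(* Fix $0<\eta<\eta'\le 1/8$, let $\lambda=\mathrm{e}^{-1}+\eta$ and $\ell=\lfloor 1/\eta'\rfloor$. Let $N_{\eta'}$ be the number of $(\lambda,1)$-light paths of length $\ell$ in $\mathcal W_n$. Then $\mathbb{E}[N_{\eta'}^2]=(1+o(1))(\mathbb{E}N_{\eta'})^2$ as $n\to\infty$, and consequently $$\lim_{n\to\infty}\mathbb{P}\big(N_{\eta'}\ge 2\,\mathbb{E}N_{\eta'}\big)=0.$$
   Context: $\mathcal W_n$ is the complete graph on $n$ vertices whose edges carry i.i.d. exponential weights $W_e$ with mean $n$. A path of length $\ell$ is a tuple $(v_0,\dots,v_\ell)$ of distinct vertices (paths are counted as ordered tuples), with total weight $W(\pi)=\sum_{i=1}^\ell W_{(v_{i-1},v_i)}$. A path of length $\ell$ is called $(\lambda,C)$-light if $W(\pi)\le\lambda\ell-C\sqrt{\ell}$. *)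

theory Defs
  imports "HOL-Probability.Probability" "HOL-Library.Landau_Symbols"
begin

definition edges :: "nat \<Rightarrow> nat set set" where
  "edges n = {{u, v} | u v. u < n \<and> v < n \<and> u \<noteq> v}"

text \<open>The random weighted complete graph W_n: i.i.d. exponential edge weights with mean n
  (rate 1/n), as a product probability measure over the edges.\<close>
definition WM :: "nat \<Rightarrow> (nat set \<Rightarrow> real) measure" where
  "WM n = PiM (edges n) (\<lambda>e. density lborel (exponential_density (1 / real n)))"

text \<open>Paths of length l: tuples (v_0,...,v_l) of distinct vertices, as lists of length l+1.\<close>
definition paths :: "nat \<Rightarrow> nat \<Rightarrow> nat list set" where
  "paths n l = {p. length p = l + 1 \<and> distinct p \<and> set p \<subseteq> {..<n}}"

definition path_weight :: "(nat set \<Rightarrow> real) \<Rightarrow> nat list \<Rightarrow> real" where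
  "path_weight w p = (\<Sum>i < length p - 1. w {p ! i, p ! Suc i})"

definition light :: "real \<Rightarrow> real \<Rightarrow> (nat set \<Rightarrow> real) \<Rightarrow> nat list \<Rightarrow> bool" where
  "light lam C w p \<longleftrightarrow>
     path_weight w p \<le> lam * real (length p - 1) - C * sqrt (real (length p - 1))"

definition count_light :: "nat \<Rightarrow> real \<Rightarrow> real \<Rightarrow> nat \<Rightarrow> (nat set \<Rightarrow> real) \<Rightarrow> nat" where
  "count_light n lam C l w = card {p \<in> paths n l. light lam C w p}"

end

theory Submission
  imports Defs
begin


definition ME :: "nat \<Rightarrow> real measure" where
  "ME n = density lborel (exponential_density (1 / real n))"

lemma WM_eq: "WM n = PiM (edges n) (\<lambda>_. ME n)" by (simp add: WM_def ME_def)

lemma prob_ME: "0 < n \<Longrightarrow> prob_space (ME n)"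
  unfolding ME_def by (rule prob_space_exponential_density) simp

lemma fin_edges: "finite (edges n)"
proof -
  have "edges n \<subseteq> Pow {..<n}" by (auto simp: edges_def)
  then show ?thesis by (rule finite_subset) auto
qed

lemma pps: "0 < n \<Longrightarrow> finite_product_prob_space (\<lambda>_. ME n) (edges n)"
  using prob_ME fin_edges unfolding finite_product_prob_space_def product_prob_space_def product_prob_space_axioms_def product_sigma_finite_def
    finite_product_sigma_finite_def finite_product_sigma_finite_axioms_def
  by (auto intro: prob_space_imp_sigma_finite)

lemma ps_WM: "0 < n \<Longrightarrow> prob_space (WM n)"
proof -
  assume "0 < n"
  then interpret finite_product_prob_space "\<lambda>_. ME n" "edges n" by (rule pps)
  show ?thesis unfolding WM_eq by (rule prob_space_axioms)
qed

lemma sets_ME[simp]: "sets (ME n) = sets borel" by (simp add: ME_def)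
lemma space_ME[simp]: "space (ME n) = UNIV" by (simp add: ME_def)

lemma ME_le: assumes "0 < n" "0 \<le> t" shows "measure (ME n) {..t} = 1 - exp (- t / real n)"
proof -
  have "emeasure (ME n) {..t} = ennreal (erlang_CDF 0 (1 / real n) t)"
    unfolding ME_def by (rule emeasure_erlang_density) (use assms in simp)
  moreover have "erlang_CDF 0 (1 / real n) t = 1 - exp (- t / real n)"
    using assms by (simp add: erlang_CDF_def)
  moreover have "0 \<le> 1 - exp (- t / real n)" using assms by simp
  ultimately show ?thesis by (simp add: measure_def)
qed

lemma ME_pos: assumes "0 < n" shows "AE x in ME n. 0 < x"
proof -
  have "emeasure (ME n) {..0} = ennreal (erlang_CDF 0 (1 / real n) 0)"
    unfolding ME_def by (rule emeasure_erlang_density) (use assms in simp)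
  then have "{..0} \<in> null_sets (ME n)" by (simp add: erlang_CDF_at0 null_sets_def)
  then show ?thesis by (rule AE_I') auto
qed

lemma AE_WM_pos: assumes "0 < n" shows "AE w in WM n. \<forall>e\<in>edges n. 0 < w e"
proof -
  interpret finite_product_prob_space "\<lambda>_. ME n" "edges n" by (rule pps[OF assms])
  have fin: "finite (edges n)"
  proof -
    have "edges n \<subseteq> Pow {..<n}" by (auto simp: edges_def)
    then show ?thesis by (rule finite_subset) auto
  qed
  show ?thesis unfolding WM_eq
    using fin by (rule AE_finite_allI) (auto intro: AE_component ME_pos[OF assms])
qed

lemma comp_le: assumes "0 < n" "e \<in> edges n"
  shows "measure (WM n) {w \<in> space (WM n). w e \<le> t} = measure (ME n) {..t}"
proof -
  interpret finite_product_prob_space "\<lambda>_. ME n" "edges n" by (rule pps[OF assms(1)])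
  have "emeasure (WM n) {w \<in> space (WM n). w e \<in> {..t}} = emeasure (ME n) {..t}"
    unfolding WM_eq by (rule emeasure_PiM_Collect_single) (use assms in auto)
  then show ?thesis by (simp add: measure_def)
qed


lemma indep_coords: assumes "0 < n" "edges n \<noteq> {}"
  shows "prob_space.indep_vars (WM n) (\<lambda>_. ME n) (\<lambda>e w. w e) (edges n)"
proof -
  interpret finite_product_prob_space "\<lambda>_. ME n" "edges n" by (rule pps[OF assms(1)])
  interpret W: prob_space "WM n" by (rule ps_WM[OF assms(1)])
  have rv: "\<And>i. i \<in> edges n \<Longrightarrow> (\<lambda>w. w i) \<in> measurable (WM n) (ME n)"
    unfolding WM_eq by simp
  have d1: "distr (WM n) (PiM (edges n) (\<lambda>_. ME n)) (\<lambda>x. \<lambda>i\<in>edges n. x i) = PiM (edges n) (\<lambda>_. ME n)"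
  proof -
    have "distr (WM n) (PiM (edges n) (\<lambda>_. ME n)) (\<lambda>x. \<lambda>i\<in>edges n. x i)
        = distr (WM n) (PiM (edges n) (\<lambda>_. ME n)) (\<lambda>x. x)"
      by (rule distr_cong) (auto simp: WM_eq space_PiM)
    also have "\<dots> = PiM (edges n) (\<lambda>_. ME n)" unfolding WM_eq by (rule distr_id)
    finally show ?thesis .
  qed
  have d2: "PiM (edges n) (\<lambda>i. distr (WM n) (ME n) (\<lambda>x. x i)) = PiM (edges n) (\<lambda>_. ME n)"
    by (rule PiM_cong) (auto simp: WM_eq PiM_component)
  show ?thesis
    by (subst W.indep_vars_iff_distr_eq_PiM'[OF assms(2)]) (use rv d1 d2 in auto)
qed

lemma indep2:
  assumes "0 < n" and ne: "edges n \<noteq> {}" and "J1 \<subseteq> edges n" "J2 \<subseteq> edges n" "J1 \<inter> J2 = {}"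
    and A: "A \<in> sets (PiM J1 (\<lambda>_. ME n))" and B: "B \<in> sets (PiM J2 (\<lambda>_. ME n))"
  shows "measure (WM n) {w \<in> space (WM n). restrict w J1 \<in> A \<and> restrict w J2 \<in> B}
       = measure (WM n) {w \<in> space (WM n). restrict w J1 \<in> A} * measure (WM n) {w \<in> space (WM n). restrict w J2 \<in> B}"
proof -
  interpret W: prob_space "WM n" by (rule ps_WM[OF assms(1)])
  define K where "K = (\<lambda>b::bool. if b then J1 else J2)"
  have ind: "W.indep_vars (\<lambda>j. PiM (K j) (\<lambda>_. ME n)) (\<lambda>j \<omega>. restrict (\<lambda>i. \<omega> i) (K j)) UNIV"
    by (rule W.indep_vars_restrict[OF indep_coords[OF assms(1) ne]])
       (use assms in \<open>auto simp: K_def disjoint_family_on_def\<close>)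
  define AB where "AB = (\<lambda>b::bool. if b then A else B)"
  have "W.prob (\<Inter>j\<in>UNIV. (\<lambda>\<omega>. restrict (\<lambda>i. \<omega> i) (K j)) -` AB j \<inter> space (WM n))
     = (\<Prod>j\<in>UNIV. W.prob ((\<lambda>\<omega>. restrict (\<lambda>i. \<omega> i) (K j)) -` AB j \<inter> space (WM n)))"
    by (rule W.indep_varsD[OF ind]) (use A B in \<open>auto simp: AB_def K_def\<close>)
  moreover have "(\<Inter>j\<in>UNIV. (\<lambda>\<omega>. restrict (\<lambda>i. \<omega> i) (K j)) -` AB j \<inter> space (WM n))
     = {w \<in> space (WM n). restrict w J1 \<in> A \<and> restrict w J2 \<in> B}"
    by (auto simp: UNIV_bool AB_def K_def)
  moreover have "(\<lambda>\<omega>. restrict (\<lambda>i. \<omega> i) (K True)) -` AB True \<inter> space (WM n) = {w \<in> space (WM n). restrict w J1 \<in> A}"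
    by (auto simp: AB_def K_def)
  moreover have "(\<lambda>\<omega>. restrict (\<lambda>i. \<omega> i) (K False)) -` AB False \<inter> space (WM n) = {w \<in> space (WM n). restrict w J2 \<in> B}"
    by (auto simp: AB_def K_def)
  ultimately show ?thesis
  proof -
    assume h1: "W.prob (\<Inter>j\<in>UNIV. (\<lambda>\<omega>. restrict (\<lambda>i. \<omega> i) (K j)) -` AB j \<inter> space (WM n))
     = (\<Prod>j\<in>UNIV. W.prob ((\<lambda>\<omega>. restrict (\<lambda>i. \<omega> i) (K j)) -` AB j \<inter> space (WM n)))"
      and h2: "(\<Inter>j\<in>UNIV. (\<lambda>\<omega>. restrict (\<lambda>i. \<omega> i) (K j)) -` AB j \<inter> space (WM n))
     = {w \<in> space (WM n). restrict w J1 \<in> A \<and> restrict w J2 \<in> B}"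
      and h3: "(\<lambda>\<omega>. restrict (\<lambda>i. \<omega> i) (K True)) -` AB True \<inter> space (WM n) = {w \<in> space (WM n). restrict w J1 \<in> A}"
      and h4: "(\<lambda>\<omega>. restrict (\<lambda>i. \<omega> i) (K False)) -` AB False \<inter> space (WM n) = {w \<in> space (WM n). restrict w J2 \<in> B}"
    have prodb: "\<And>f::bool\<Rightarrow>real. (\<Prod>j\<in>UNIV. f j) = f True * f False" by (simp add: UNIV_bool)
    from h1 have "W.prob (\<Inter>j\<in>UNIV. (\<lambda>\<omega>. restrict (\<lambda>i. \<omega> i) (K j)) -` AB j \<inter> space (WM n))
      = W.prob ((\<lambda>\<omega>. restrict (\<lambda>i. \<omega> i) (K True)) -` AB True \<inter> space (WM n)) *
        W.prob ((\<lambda>\<omega>. restrict (\<lambda>i. \<omega> i) (K False)) -` AB False \<inter> space (WM n))"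
      by (simp only: prodb)
    then show ?thesis by (simp only: h2 h3 h4)
  qed
qed


fun edg :: "nat list \<Rightarrow> nat set set" where
  "edg (x # y # r) = insert {x, y} (edg (y # r))"
| "edg _ = {}"

fun pwr :: "(nat set \<Rightarrow> real) \<Rightarrow> nat list \<Rightarrow> real" where
  "pwr w (x # y # r) = w {x, y} + pwr w (y # r)"
| "pwr w _ = 0"

fun fedg :: "nat set \<Rightarrow> nat list \<Rightarrow> nat set set" where
  "fedg V (x # y # r) = (if x \<notin> V \<or> y \<notin> V then insert {x, y} (fedg V (y # r)) else fedg V (y # r))"
| "fedg V _ = {}"

fun badr :: "nat set \<Rightarrow> nat list \<Rightarrow> nat" where
  "badr V (x # y # r) = (if x \<notin> V \<or> y \<notin> V then 1 else 0) + badr V (y # r)"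
| "badr V _ = 0"

definition out :: "nat set \<Rightarrow> nat list \<Rightarrow> nat" where
  "out V q = length (filter (\<lambda>x. x \<notin> V) q)"

lemma path_weight_pwr: "path_weight w p = pwr w p"
proof (induction w p rule: pwr.induct)
  case (1 w x y r)
  have "path_weight w (x # y # r) = (\<Sum>i<Suc (length r). w {(x # y # r) ! i, (x # y # r) ! Suc i})"
    by (simp add: path_weight_def)
  also have "\<dots> = w {x, y} + (\<Sum>i<length r. w {(y # r) ! i, (y # r) ! Suc i})"
    by (subst sum.lessThan_Suc_shift) simp
  also have "(\<Sum>i<length r. w {(y # r) ! i, (y # r) ! Suc i}) = path_weight w (y # r)"
    by (simp add: path_weight_def)
  finally show ?case using 1 by simp
qed (auto simp: path_weight_def)

lemma pwr_cong: "(\<And>e. e \<in> edg p \<Longrightarrow> w e = w' e) \<Longrightarrow> pwr w p = pwr w' p"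
  by (induction w p rule: pwr.induct) auto

lemma edg_subset: "e \<in> edg p \<Longrightarrow> e \<subseteq> set p"
  by (induction p rule: edg.induct) auto

lemma edg_edges: "distinct p \<Longrightarrow> set p \<subseteq> {..<n} \<Longrightarrow> edg p \<subseteq> edges n"
  by (induction p rule: edg.induct) (auto simp: edges_def)

lemma fedg_sub: "fedg V q \<subseteq> edg q"
  by (induction V q rule: fedg.induct) auto

lemma fedg_notV: "e \<in> fedg V q \<Longrightarrow> \<not> e \<subseteq> V"
  by (induction V q rule: fedg.induct) (auto split: if_splits)

lemma finite_edg: "finite (edg p)"
  by (induction p rule: edg.induct) auto

lemma finite_fedg: "finite (fedg V q)"
  by (rule finite_subset[OF fedg_sub finite_edg])

lemma card_fedg: "distinct q \<Longrightarrow> card (fedg V q) = badr V q"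
proof (induction V q rule: fedg.induct)
  case (1 V x y r)
  have "{x, y} \<notin> fedg V (y # r)"
  proof
    assume "{x, y} \<in> fedg V (y # r)"
    then have "{x, y} \<subseteq> set (y # r)" using fedg_sub edg_subset by blast
    then show False using 1(3) by auto
  qed
  then show ?case using 1 by (auto simp: finite_fedg)
qed auto

lemma card_edg: "card (edg p) \<le> length p - 1"
proof (induction p rule: edg.induct)
  case (1 x y r)
  have "card (edg (x # y # r)) \<le> Suc (card (edg (y # r)))"
    by (simp add: card_insert_if finite_edg)
  then show ?case using 1 by simp
qed auto

lemma pwr_le: "(\<And>e. e \<in> edg p \<Longrightarrow> w e \<le> s) \<Longrightarrow> pwr w p \<le> s * real (length p - 1)"
proof (induction w p rule: pwr.induct)
  case (1 w x y r)
  then have "pwr w (y # r) \<le> s * real (length (y # r) - 1)" by auto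
  moreover have "w {x, y} \<le> s" using 1 by auto
  ultimately show ?case by (simp add: algebra_simps)
qed auto

lemma pwr_nonneg: "(\<And>e. e \<in> edg p \<Longrightarrow> 0 \<le> w e) \<Longrightarrow> 0 \<le> pwr w p"
  by (induction w p rule: pwr.induct) auto

lemma edge_le_pwr: "(\<And>e. e \<in> edg p \<Longrightarrow> 0 \<le> w e) \<Longrightarrow> e \<in> edg p \<Longrightarrow> w e \<le> pwr w p"
proof (induction w p rule: pwr.induct)
  case (1 w x y r)
  have "0 \<le> pwr w (y # r)" by (rule pwr_nonneg) (use 1 in auto)
  moreover have "0 \<le> w {x, y}" using 1 by auto
  show ?case
  proof (cases "e = {x, y}")
    case True then show ?thesis using \<open>0 \<le> pwr w (y # r)\<close> by simp
  next
    case False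
    then have "w e \<le> pwr w (y # r)" using 1 by auto
    then show ?thesis using \<open>0 \<le> w {x, y}\<close> by simp
  qed
qed auto

lemma out_badr:
  shows "(q \<noteq> [] \<longrightarrow> out V q \<le> badr V q + 1) \<and> ((\<exists>x\<in>set q. x \<in> V) \<longrightarrow> out V q \<le> badr V q)"
proof (induction V q rule: badr.induct)
  case (1 V x y r)
  then show ?case by (auto simp: out_def)
qed (auto simp: out_def)

lemma prod_psi: "prod_list (map (\<lambda>u. if u \<in> V then 1 else c) q) = (c::real) ^ out V q"
  by (induction q) (auto simp: out_def)


lemma comp_meas: "i \<in> J \<Longrightarrow> (\<lambda>v. v i) \<in> borel_measurable (PiM J (\<lambda>_. ME n))"
proof -
  assume "i \<in> J"
  then have "(\<lambda>v. v i) \<in> measurable (PiM J (\<lambda>_. ME n)) (ME n)" by (rule measurable_component_singleton)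
  moreover have "measurable (PiM J (\<lambda>_. ME n)) (ME n) = measurable (PiM J (\<lambda>_. ME n)) borel"
    by (rule measurable_cong_sets) auto
  ultimately show ?thesis by simp
qed

lemma pwr_meas: "edg p \<subseteq> J \<Longrightarrow> (\<lambda>v. pwr v p) \<in> borel_measurable (PiM J (\<lambda>_. ME n))"
proof (induction p rule: edg.induct)
  case (1 x y r)
  then have "{x, y} \<in> J" "edg (y # r) \<subseteq> J" by auto
  have "(\<lambda>v. v {x, y} + pwr v (y # r)) \<in> borel_measurable (PiM J (\<lambda>_. ME n))"
    by (rule borel_measurable_add[OF comp_meas[OF \<open>{x, y} \<in> J\<close>] 1(1)[OF \<open>edg (y # r) \<subseteq> J\<close>]])
  then show ?case by simp
qed auto

lemma box_sets: "F \<subseteq> J \<Longrightarrow> finite F \<Longrightarrow> {v \<in> space (PiM J (\<lambda>_. ME n)). \<forall>e\<in>F. v e \<le> t} \<in> sets (PiM J (\<lambda>_. ME n))"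
proof -
  assume a: "F \<subseteq> J" "finite F"
  have "\<And>e. e \<in> F \<Longrightarrow> {v \<in> space (PiM J (\<lambda>_. ME n)). v e \<le> t} \<in> sets (PiM J (\<lambda>_. ME n))"
  proof -
    fix e assume "e \<in> F"
    have "(\<lambda>v. v e) \<in> borel_measurable (PiM J (\<lambda>_. ME n))" by (rule comp_meas) (use a \<open>e \<in> F\<close> in auto)
    then show "{v \<in> space (PiM J (\<lambda>_. ME n)). v e \<le> t} \<in> sets (PiM J (\<lambda>_. ME n))"
      by (rule borel_measurable_le[OF _ borel_measurable_const])
  qed
  then show ?thesis using a(2) by (rule sets.sets_Collect_finite_All)
qed
lemma restrict_sp: "w \<in> space (WM n) \<Longrightarrow> J \<subseteq> edges n \<Longrightarrow> restrict w J \<in> space (PiM J (\<lambda>_. ME n))"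
  by (auto simp: WM_eq space_PiM PiE_iff)

lemma box_prob:
  assumes n: "0 < n" "edges n \<noteq> {}" and F: "F \<subseteq> edges n" and t: "0 \<le> t"
  shows "measure (WM n) {w \<in> space (WM n). \<forall>e\<in>F. w e \<le> t} = (1 - exp (- t / real n)) ^ card F"
proof -
  have "finite F" using F fin_edges finite_subset by blast
  then show ?thesis using F
  proof (induction F rule: finite_induct)
    case empty
    interpret W: prob_space "WM n" by (rule ps_WM[OF n(1)])
    show ?case by (simp add: W.prob_space)
  next
    case (insert e F)
    have e: "e \<in> edges n" using insert by auto
    have s1: "{v \<in> space (PiM {e} (\<lambda>_. ME n)). \<forall>e'\<in>{e}. v e' \<le> t} \<in> sets (PiM {e} (\<lambda>_. ME n))"
      by (rule box_sets) auto
    have s2: "{v \<in> space (PiM F (\<lambda>_. ME n)). \<forall>e'\<in>F. v e' \<le> t} \<in> sets (PiM F (\<lambda>_. ME n))"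
      by (rule box_sets) (use insert in auto)
    have q1: "{w \<in> space (WM n). \<forall>e'\<in>insert e F. w e' \<le> t}
       = {w \<in> space (WM n). restrict w {e} \<in> {v \<in> space (PiM {e} (\<lambda>_. ME n)). \<forall>e'\<in>{e}. v e' \<le> t}
           \<and> restrict w F \<in> {v \<in> space (PiM F (\<lambda>_. ME n)). \<forall>e'\<in>F. v e' \<le> t}}"
      using insert(4) restrict_sp[of _ n "{e}"] restrict_sp[of _ n F] e by auto
    have q2: "measure (WM n) {w \<in> space (WM n). restrict w {e} \<in> {v \<in> space (PiM {e} (\<lambda>_. ME n)). \<forall>e'\<in>{e}. v e' \<le> t}
           \<and> restrict w F \<in> {v \<in> space (PiM F (\<lambda>_. ME n)). \<forall>e'\<in>F. v e' \<le> t}}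
        = measure (WM n) {w \<in> space (WM n). restrict w {e} \<in> {v \<in> space (PiM {e} (\<lambda>_. ME n)). \<forall>e'\<in>{e}. v e' \<le> t}}
       * measure (WM n) {w \<in> space (WM n). restrict w F \<in> {v \<in> space (PiM F (\<lambda>_. ME n)). \<forall>e'\<in>F. v e' \<le> t}}"
      by (rule indep2[OF n _ _ _ s1 s2]) (use insert e in auto)
    have q3: "{w \<in> space (WM n). restrict w {e} \<in> {v \<in> space (PiM {e} (\<lambda>_. ME n)). \<forall>e'\<in>{e}. v e' \<le> t}}
        = {w \<in> space (WM n). w e \<le> t}"
      using restrict_sp[of _ n "{e}"] e by auto
    have q4: "{w \<in> space (WM n). restrict w F \<in> {v \<in> space (PiM F (\<lambda>_. ME n)). \<forall>e'\<in>F. v e' \<le> t}}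
        = {w \<in> space (WM n). \<forall>e'\<in>F. w e' \<le> t}"
      using insert(4) restrict_sp[of _ n F] by auto
    have q5: "measure (WM n) {w \<in> space (WM n). w e \<le> t} = 1 - exp (- t / real n)"
      using comp_le[OF n(1) e] ME_le[OF n(1) t] by simp
    have "card (insert e F) = Suc (card F)" using insert by simp
    moreover have ih: "measure (WM n) {w \<in> space (WM n). \<forall>e'\<in>F. w e' \<le> t} = (1 - exp (- t / real n)) ^ card F"
      by (rule insert(3)) (use insert(4) in auto)
    ultimately show ?case unfolding q1 q2 q3 q4 q5 ih by simp
  qed
qed


definition Xs :: "nat \<Rightarrow> real \<Rightarrow> real \<Rightarrow> nat list \<Rightarrow> (nat set \<Rightarrow> real) set" where
  "Xs n lam C p = {w \<in> space (WM n). light lam C w p}"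

definition LS :: "nat \<Rightarrow> real \<Rightarrow> real \<Rightarrow> nat list \<Rightarrow> (nat set \<Rightarrow> real) set" where
  "LS n lam C p = {v \<in> space (PiM (edg p) (\<lambda>_. ME n)). light lam C v p}"

lemma light_pwr: "light lam C w p \<longleftrightarrow> pwr w p \<le> lam * real (length p - 1) - C * sqrt (real (length p - 1))"
  by (simp add: light_def path_weight_pwr)

lemma paths_edg: "p \<in> paths n l \<Longrightarrow> edg p \<subseteq> edges n"
  by (rule edg_edges) (auto simp: paths_def)

lemma LS_sets: "LS n lam C p \<in> sets (PiM (edg p) (\<lambda>_. ME n))"
proof -
  have "(\<lambda>v. pwr v p) \<in> borel_measurable (PiM (edg p) (\<lambda>_. ME n))" by (rule pwr_meas) simp
  then have "{v \<in> space (PiM (edg p) (\<lambda>_. ME n)). pwr v p \<le> lam * real (length p - 1) - C * sqrt (real (length p - 1))}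
     \<in> sets (PiM (edg p) (\<lambda>_. ME n))"
    by (rule borel_measurable_le[OF _ borel_measurable_const])
  then show ?thesis unfolding LS_def light_pwr .
qed

lemma Xs_sets: "p \<in> paths n l \<Longrightarrow> Xs n lam C p \<in> sets (WM n)"
proof -
  assume p: "p \<in> paths n l"
  have "(\<lambda>v. pwr v p) \<in> borel_measurable (PiM (edges n) (\<lambda>_. ME n))" by (rule pwr_meas) (rule paths_edg[OF p])
  then have "{v \<in> space (PiM (edges n) (\<lambda>_. ME n)). pwr v p \<le> lam * real (length p - 1) - C * sqrt (real (length p - 1))}
     \<in> sets (PiM (edges n) (\<lambda>_. ME n))"
    by (rule borel_measurable_le[OF _ borel_measurable_const])
  then show ?thesis unfolding Xs_def light_pwr WM_eq .
qed

lemma light_restrict: "light lam C (restrict w (edg p)) p \<longleftrightarrow> light lam C w p"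
proof -
  have "pwr (restrict w (edg p)) p = pwr w p" by (rule pwr_cong) simp
  then show ?thesis by (simp add: light_pwr)
qed

lemma Xs_restrict: "p \<in> paths n l \<Longrightarrow> Xs n lam C p = {w \<in> space (WM n). restrict w (edg p) \<in> LS n lam C p}"
proof -
  assume p: "p \<in> paths n l"
  have "\<And>w. w \<in> space (WM n) \<Longrightarrow> restrict w (edg p) \<in> space (PiM (edg p) (\<lambda>_. ME n))"
    using restrict_sp paths_edg[OF p] by blast
  then show ?thesis unfolding Xs_def LS_def using light_restrict[of lam C _ p] by blast
qed

lemma edg_disj: "set p \<inter> set q = {} \<Longrightarrow> edg p \<inter> edg q = {}"
proof -
  assume a: "set p \<inter> set q = {}"
  have "\<And>e. e \<in> edg p \<Longrightarrow> e \<in> edg q \<Longrightarrow> False"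
  proof -
    fix e assume "e \<in> edg p" "e \<in> edg q"
    then have "e \<subseteq> set p" "e \<subseteq> set q" "e \<noteq> {}" using edg_subset edg.simps
      by (auto, induction p rule: edg.induct, auto)
    then show False using a by blast
  qed
  then show ?thesis by blast
qed

lemma pair_disj:
  assumes n: "0 < n" "edges n \<noteq> {}" and p: "p \<in> paths n l" and q: "q \<in> paths n l"
    and d: "set p \<inter> set q = {}"
  shows "measure (WM n) (Xs n lam C p \<inter> Xs n lam C q) = measure (WM n) (Xs n lam C p) * measure (WM n) (Xs n lam C q)"
proof -
  have "Xs n lam C p \<inter> Xs n lam C q = {w \<in> space (WM n). restrict w (edg p) \<in> LS n lam C p \<and> restrict w (edg q) \<in> LS n lam C q}"
    unfolding Xs_restrict[OF p] Xs_restrict[OF q] by blast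
  then show ?thesis
    unfolding Xs_restrict[OF p] Xs_restrict[OF q]
    using indep2[OF n paths_edg[OF p] paths_edg[OF q] edg_disj[OF d] LS_sets LS_sets] by simp
qed

lemma pair_gen:
  assumes n: "0 < n" "edges n \<noteq> {}" and p: "p \<in> paths n l" and q: "q \<in> paths n l"
    and T: "T = lam * real l - C * sqrt (real l)" "0 \<le> T"
  shows "measure (WM n) (Xs n lam C p \<inter> Xs n lam C q) \<le> measure (WM n) (Xs n lam C p) * (1 - exp (- T / real n)) ^ badr (set p) q"
proof -
  interpret W: prob_space "WM n" by (rule ps_WM[OF n(1)])
  define F where "F = fedg (set p) q"
  have Fq: "F \<subseteq> edg q" unfolding F_def by (rule fedg_sub)
  have Fe: "F \<subseteq> edges n" using Fq paths_edg[OF q] by blast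
  have finF: "finite F" unfolding F_def by (rule finite_fedg)
  have dq: "distinct q" using q by (simp add: paths_def)
  have lq: "length q - 1 = l" using q by (simp add: paths_def)
  have disj: "edg p \<inter> F = {}"
  proof -
    have "\<And>e. e \<in> edg p \<Longrightarrow> e \<in> F \<Longrightarrow> False"
    proof -
      fix e assume "e \<in> edg p" "e \<in> F"
      then have "e \<subseteq> set p" "\<not> e \<subseteq> set p" using edg_subset fedg_notV unfolding F_def by blast+
      then show False by blast
    qed
    then show ?thesis by blast
  qed
  define B where "B = {v \<in> space (PiM F (\<lambda>_. ME n)). \<forall>e\<in>F. v e \<le> T}"
  have Bs: "B \<in> sets (PiM F (\<lambda>_. ME n))" unfolding B_def by (rule box_sets[OF subset_refl finF])
  define S where "S = {w \<in> space (WM n). restrict w (edg p) \<in> LS n lam C p \<and> restrict w F \<in> B}"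
  have S_eq: "S = Xs n lam C p \<inter> {w \<in> space (WM n). \<forall>e\<in>F. w e \<le> T}"
    unfolding S_def B_def Xs_restrict[OF p] using restrict_sp[OF _ Fe] by auto
  have Bsets: "{w \<in> space (WM n). \<forall>e\<in>F. w e \<le> T} \<in> sets (WM n)"
    unfolding WM_eq by (rule box_sets[OF Fe finF])
  have Ssets: "S \<in> sets (WM n)" unfolding S_eq by (rule sets.Int[OF Xs_sets[OF p] Bsets])
  have AE: "AE w in WM n. w \<in> Xs n lam C p \<inter> Xs n lam C q \<longrightarrow> w \<in> S"
    using AE_WM_pos[OF n(1)]
  proof (rule AE_mp, intro AE_I2 impI)
    fix w assume w: "w \<in> space (WM n)" and pos: "\<forall>e\<in>edges n. 0 < w e"
      and X: "w \<in> Xs n lam C p \<inter> Xs n lam C q"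
    have nn: "\<And>e. e \<in> edg q \<Longrightarrow> 0 \<le> w e" using pos paths_edg[OF q] by (meson less_imp_le subsetD)
    have "pwr w q \<le> T" using X T(1) lq by (simp add: Xs_def light_pwr)
    then have "\<forall>e\<in>F. w e \<le> T" using edge_le_pwr[OF nn] Fq by (meson order_trans subsetD)
    then show "w \<in> S" unfolding S_eq using X w by blast
  qed
  have "measure (WM n) (Xs n lam C p \<inter> Xs n lam C q) \<le> measure (WM n) S"
    by (rule W.finite_measure_mono_AE[OF AE Ssets])
  also have "measure (WM n) S = measure (WM n) {w \<in> space (WM n). restrict w (edg p) \<in> LS n lam C p}
      * measure (WM n) {w \<in> space (WM n). restrict w F \<in> B}"
    unfolding S_def by (rule indep2[OF n paths_edg[OF p] Fe disj LS_sets Bs])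
  also have "{w \<in> space (WM n). restrict w (edg p) \<in> LS n lam C p} = Xs n lam C p"
    by (rule Xs_restrict[OF p, symmetric])
  also have "{w \<in> space (WM n). restrict w F \<in> B} = {w \<in> space (WM n). \<forall>e\<in>F. w e \<le> T}"
    unfolding B_def using restrict_sp[OF _ Fe] by auto
  also have "measure (WM n) {w \<in> space (WM n). \<forall>e\<in>F. w e \<le> T} = (1 - exp (- T / real n)) ^ card F"
    by (rule box_prob[OF n Fe T(2)])
  also have "card F = badr (set p) q" unfolding F_def by (rule card_fedg[OF dq])
  finally show ?thesis by simp
qed

lemma single_lower:
  assumes n: "0 < n" "edges n \<noteq> {}" and p: "p \<in> paths n l" and l: "0 < l"
    and T: "T = lam * real l - C * sqrt (real l)" "0 \<le> T"
  shows "(1 - exp (- (T / real l) / real n)) ^ l \<le> measure (WM n) (Xs n lam C p)"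
proof -
  interpret W: prob_space "WM n" by (rule ps_WM[OF n(1)])
  have lp: "length p - 1 = l" using p by (simp add: paths_def)
  have t: "0 \<le> T / real l" using T l by simp
  have E: "edg p \<subseteq> edges n" by (rule paths_edg[OF p])
  have sub: "{w \<in> space (WM n). \<forall>e\<in>edg p. w e \<le> T / real l} \<subseteq> Xs n lam C p"
  proof
    fix w assume w: "w \<in> {w \<in> space (WM n). \<forall>e\<in>edg p. w e \<le> T / real l}"
    then have "pwr w p \<le> T / real l * real (length p - 1)" by (intro pwr_le) auto
    moreover have "T / real l * real (length p - 1) = T" using lp l by simp
    ultimately have "pwr w p \<le> T" by simp
    then show "w \<in> Xs n lam C p" using w T(1) lp by (simp add: Xs_def light_pwr)
  qed
  have b0: "0 \<le> 1 - exp (- (T / real l) / real n)" using T(2) n by simp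
  have b1: "1 - exp (- (T / real l) / real n) \<le> 1" by simp
  have "(1 - exp (- (T / real l) / real n)) ^ l \<le> (1 - exp (- (T / real l) / real n)) ^ card (edg p)"
    by (rule power_decreasing[OF _ b0 b1]) (use card_edg[of p] lp in simp)
  also have "\<dots> = measure (WM n) {w \<in> space (WM n). \<forall>e\<in>edg p. w e \<le> T / real l}"
    by (rule box_prob[OF n E t, symmetric])
  also have "\<dots> \<le> measure (WM n) (Xs n lam C p)"
    by (rule W.finite_measure_mono[OF sub Xs_sets[OF p]])
  finally show ?thesis .
qed


lemma sum_lists_prod:
  fixes \<psi> :: "nat \<Rightarrow> real"
  assumes "finite A"
  shows "(\<Sum>q\<in>{xs. set xs \<subseteq> A \<and> length xs = m}. prod_list (map \<psi> q)) = (\<Sum>u\<in>A. \<psi> u) ^ m"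
proof (induction m)
  case 0
  have "{xs. set xs \<subseteq> A \<and> length xs = 0} = {[]}" by auto
  then show ?case by simp
next
  case (Suc m)
  let ?S = "{xs. set xs \<subseteq> A \<and> length xs = m}"
  have inj: "inj_on (\<lambda>(xs, n). n # xs) (?S \<times> A)" by (auto simp: inj_on_def)
  have fin: "finite ?S" using finite_lists_length_eq[OF assms] by simp
  have "(\<Sum>q\<in>{xs. set xs \<subseteq> A \<and> length xs = Suc m}. prod_list (map \<psi> q))
      = (\<Sum>z\<in>?S \<times> A. prod_list (map \<psi> ((\<lambda>(xs, n). n # xs) z)))"
    unfolding lists_length_Suc_eq by (rule sum.reindex[OF inj, unfolded comp_def])
  also have "\<dots> = (\<Sum>xs\<in>?S. \<Sum>u\<in>A. \<psi> u * prod_list (map \<psi> xs))"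
    by (simp add: sum.cartesian_product case_prod_unfold)
  also have "\<dots> = (\<Sum>xs\<in>?S. prod_list (map \<psi> xs)) * (\<Sum>u\<in>A. \<psi> u)"
    by (simp add: sum_distrib_right sum_distrib_left mult.commute)
  finally show ?case using Suc by simp
qed

lemma count_bound:
  assumes n: "0 < n" and p: "p \<in> paths n l" and a: "0 \<le> a" "a \<le> 1" "a \<le> T / real n" and T: "0 \<le> T"
  shows "(\<Sum>q \<in> {q \<in> paths n l. set p \<inter> set q \<noteq> {}}. a ^ badr (set p) q) \<le> (max 1 T) ^ (l + 1) * (real l + 2) ^ (l + 1)"
proof -
  define V where "V = set p"
  define \<psi> where "\<psi> = (\<lambda>u. if u \<in> V then 1 else 1 / real n)"
  define L where "L = {xs. set xs \<subseteq> {..<n} \<and> length xs = l + 1}"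
  have finL: "finite L" unfolding L_def using finite_lists_length_eq[of "{..<n}" "l+1"] by simp
  have cV: "card V \<le> l + 1" unfolding V_def using p card_length[of p] by (simp add: paths_def)
  have trm: "a ^ badr V q \<le> (max 1 T) ^ (l + 1) * prod_list (map \<psi> q)"
    if q: "q \<in> paths n l" "V \<inter> set q \<noteq> {}" for q
  proof -
    have ob: "out V q \<le> badr V q" using out_badr[of q V] q(2) by blast
    have ol: "out V q \<le> l + 1"
    proof -
      have "length q = l + 1" using q(1) by (simp add: paths_def)
      then show ?thesis unfolding out_def using length_filter_le[of "\<lambda>x. x \<notin> V" q] by simp
    qed
    have "a ^ badr V q \<le> a ^ out V q" by (rule power_decreasing[OF ob a(1) a(2)])
    also have "\<dots> \<le> (T / real n) ^ out V q" by (rule power_mono[OF a(3) a(1)])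
    also have "\<dots> = T ^ out V q * (1 / real n) ^ out V q" by (simp add: power_divide)
    also have "T ^ out V q \<le> (max 1 T) ^ (l + 1)"
    proof -
      have "T ^ out V q \<le> (max 1 T) ^ out V q" by (rule power_mono) (use T in auto)
      also have "\<dots> \<le> (max 1 T) ^ (l + 1)" by (rule power_increasing[OF ol]) simp
      finally show ?thesis .
    qed
    also have "(1 / real n) ^ out V q = prod_list (map \<psi> q)" unfolding \<psi>_def by (rule prod_psi[symmetric])
    finally show ?thesis by (simp add: mult_right_mono)
  qed
  have sub: "{q \<in> paths n l. set p \<inter> set q \<noteq> {}} \<subseteq> L" unfolding L_def paths_def by auto
  have psi0: "0 \<le> prod_list (map \<psi> q)" for q unfolding \<psi>_def by (induction q) auto
  have "(\<Sum>q \<in> {q \<in> paths n l. set p \<inter> set q \<noteq> {}}. a ^ badr (set p) q)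
      \<le> (\<Sum>q \<in> {q \<in> paths n l. set p \<inter> set q \<noteq> {}}. (max 1 T) ^ (l + 1) * prod_list (map \<psi> q))"
    by (rule sum_mono) (use trm in \<open>auto simp: V_def\<close>)
  also have "\<dots> \<le> (\<Sum>q \<in> L. (max 1 T) ^ (l + 1) * prod_list (map \<psi> q))"
    by (rule sum_mono2[OF finL sub]) (simp add: psi0)
  also have "\<dots> = (max 1 T) ^ (l + 1) * (\<Sum>u<n. \<psi> u) ^ (l + 1)"
    unfolding L_def sum_distrib_left[symmetric] by (subst sum_lists_prod) auto
  also have "(\<Sum>u<n. \<psi> u) \<le> real l + 2"
  proof -
    have "(\<Sum>u<n. \<psi> u) \<le> (\<Sum>u<n. (if u \<in> V then 1 else 0) + 1 / real n)"
      by (rule sum_mono) (auto simp: \<psi>_def)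
    also have "\<dots> = real (card ({..<n} \<inter> V)) + 1"
      using n by (simp add: sum.distrib sum.If_cases)
    also have "card ({..<n} \<inter> V) \<le> card V" by (rule card_mono) (auto simp: V_def)
    finally show ?thesis using cV by linarith
  qed
  then have "(\<Sum>u<n. \<psi> u) ^ (l + 1) \<le> (real l + 2) ^ (l + 1)"
    by (rule power_mono) (auto simp: \<psi>_def intro: sum_nonneg)
  then have "(max 1 T) ^ (l + 1) * (\<Sum>u<n. \<psi> u) ^ (l + 1) \<le> (max 1 T) ^ (l + 1) * (real l + 2) ^ (l + 1)"
    by (rule mult_left_mono) simp
  finally show ?thesis .
qed


lemma finite_paths: "finite (paths n l)"
proof -
  have "paths n l \<subseteq> {xs. set xs \<subseteq> {..<n} \<and> length xs = l + 1}" by (auto simp: paths_def)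
  moreover have "finite {xs. set xs \<subseteq> {..<n} \<and> length xs = l + 1}" by (rule finite_lists_length_eq) simp
  ultimately show ?thesis by (rule finite_subset)
qed

lemma card_filter_sum: "finite A \<Longrightarrow> real (card {x \<in> A. Q x}) = (\<Sum>x\<in>A. if Q x then 1 else 0)"
proof -
  assume f: "finite A"
  have "real (card {x \<in> A. Q x}) = (\<Sum>x\<in>{x \<in> A. Q x}. 1)" by simp
  also have "\<dots> = (\<Sum>x\<in>A. if Q x then 1 else 0)" by (rule sum.inter_filter[OF f])
  finally show ?thesis .
qed

lemma N_sum: "w \<in> space (WM n) \<Longrightarrow>
  real (count_light n lam C l w) = (\<Sum>p\<in>paths n l. indicator (Xs n lam C p) w)"
  unfolding count_light_def by (subst card_filter_sum[OF finite_paths]) (auto simp: Xs_def indicator_def of_bool_def)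

lemma N_sq_sum: "w \<in> space (WM n) \<Longrightarrow>
  (real (count_light n lam C l w))\<^sup>2 = (\<Sum>p\<in>paths n l. \<Sum>q\<in>paths n l. indicator (Xs n lam C p \<inter> Xs n lam C q) w)"
  by (simp add: N_sum power2_eq_square sum_product indicator_inter_arith)

context
  fixes n :: nat and lam C :: real and l :: nat
  assumes n: "0 < n"
begin

interpretation W: prob_space "WM n" by (rule ps_WM[OF n])

lemma N_meas: "(\<lambda>w. real (count_light n lam C l w)) \<in> borel_measurable (WM n)"
proof -
  have "(\<lambda>w. \<Sum>p\<in>paths n l. indicator (Xs n lam C p) w :: real) \<in> borel_measurable (WM n)"
    by (intro borel_measurable_sum borel_measurable_indicator Xs_sets) auto
  then show ?thesis by (subst measurable_cong[OF N_sum]) auto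
qed

lemma N_bound: "norm (real (count_light n lam C l w)) \<le> real (card (paths n l))"
  unfolding count_light_def by (simp add: card_mono finite_paths)

lemma N_int: "integrable (WM n) (\<lambda>w. real (count_light n lam C l w))"
  by (rule W.integrable_const_bound[where B = "real (card (paths n l))", OF _ N_meas]) (use N_bound in auto)

lemma N_sq_int: "integrable (WM n) (\<lambda>w. (real (count_light n lam C l w))\<^sup>2)"
proof (rule W.integrable_const_bound[where B="(real (card (paths n l)))\<^sup>2"])
  show "AE x in WM n. norm ((real (count_light n lam C l x))\<^sup>2) \<le> (real (card (paths n l)))\<^sup>2"
    using N_bound[of ] by (auto intro!: power_mono simp: count_light_def card_mono finite_paths)
  show "(\<lambda>w. (real (count_light n lam C l w))\<^sup>2) \<in> borel_measurable (WM n)"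
    using N_meas by measurable
qed

lemma EN: "integral\<^sup>L (WM n) (\<lambda>w. real (count_light n lam C l w)) = (\<Sum>p\<in>paths n l. measure (WM n) (Xs n lam C p))"
proof -
  have "integral\<^sup>L (WM n) (\<lambda>w. real (count_light n lam C l w)) = integral\<^sup>L (WM n) (\<lambda>w. \<Sum>p\<in>paths n l. indicator (Xs n lam C p) w)"
    by (rule Bochner_Integration.integral_cong[OF refl]) (auto simp: N_sum)
  also have "\<dots> = (\<Sum>p\<in>paths n l. integral\<^sup>L (WM n) (indicator (Xs n lam C p)))"
    by (rule Bochner_Integration.integral_sum) (auto intro!: Xs_sets simp: less_top[symmetric])
  also have "\<dots> = (\<Sum>p\<in>paths n l. measure (WM n) (Xs n lam C p))"
    by (rule sum.cong) (auto simp: Xs_def Int_absorb2)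
  finally show ?thesis .
qed

lemma inter_sp: "Xs n lam C p \<inter> Xs n lam C q \<inter> space (WM n) = Xs n lam C p \<inter> Xs n lam C q"
  by (auto simp: Xs_def)

lemma EN2: "integral\<^sup>L (WM n) (\<lambda>w. (real (count_light n lam C l w))\<^sup>2)
   = (\<Sum>p\<in>paths n l. \<Sum>q\<in>paths n l. measure (WM n) (Xs n lam C p \<inter> Xs n lam C q))"
proof -
  have "integral\<^sup>L (WM n) (\<lambda>w. (real (count_light n lam C l w))\<^sup>2)
      = integral\<^sup>L (WM n) (\<lambda>w. \<Sum>p\<in>paths n l. \<Sum>q\<in>paths n l. indicator (Xs n lam C p \<inter> Xs n lam C q) w)"
    by (rule Bochner_Integration.integral_cong[OF refl]) (auto simp: N_sq_sum)
  also have "\<dots> = (\<Sum>p\<in>paths n l. integral\<^sup>L (WM n) (\<lambda>w. \<Sum>q\<in>paths n l. indicator (Xs n lam C p \<inter> Xs n lam C q) w))"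
    by (rule Bochner_Integration.integral_sum) (auto intro!: Bochner_Integration.integrable_sum sets.Int Xs_sets simp: less_top[symmetric])
  also have "\<dots> = (\<Sum>p\<in>paths n l. \<Sum>q\<in>paths n l. integral\<^sup>L (WM n) (indicator (Xs n lam C p \<inter> Xs n lam C q)))"
    by (rule sum.cong[OF refl], rule Bochner_Integration.integral_sum) (auto intro!: Xs_sets simp: less_top[symmetric])
  also have "\<dots> = (\<Sum>p\<in>paths n l. \<Sum>q\<in>paths n l. measure (WM n) (Xs n lam C p \<inter> Xs n lam C q))"
    by (intro sum.cong refl) (simp add: inter_sp)
  finally show ?thesis .
qed

end


context
  fixes n :: nat and lam C :: real and l :: nat and T :: real
  assumes n: "0 < n" "edges n \<noteq> {}" and T: "T = lam * real l - C * sqrt (real l)" "0 \<le> T" "T \<le> real n"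
begin

interpretation W: prob_space "WM n" by (rule ps_WM[OF n(1)])

lemma upper:
  defines "\<mu> \<equiv> (\<Sum>p\<in>paths n l. measure (WM n) (Xs n lam C p))"
  shows "(\<Sum>p\<in>paths n l. \<Sum>q\<in>paths n l. measure (WM n) (Xs n lam C p \<inter> Xs n lam C q))
     \<le> \<mu>\<^sup>2 + (max 1 T) ^ (l + 1) * (real l + 2) ^ (l + 1) * \<mu>"
proof -
  define K where "K = (max 1 T) ^ (l + 1) * (real l + 2) ^ (l + 1)"
  define a where "a = 1 - exp (- T / real n)"
  define \<pi> where "\<pi> = (\<lambda>p. measure (WM n) (Xs n lam C p))"
  have "0 \<le> T / real n" using T(2) by simp
  then have a0: "0 \<le> a" unfolding a_def by simp
  have a1: "a \<le> 1" unfolding a_def by simp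
  have aT: "a \<le> T / real n" unfolding a_def using exp_ge_add_one_self[of "- T / real n"] by simp
  have pi0: "\<And>p. 0 \<le> \<pi> p" unfolding \<pi>_def by simp
  have row: "(\<Sum>q\<in>paths n l. measure (WM n) (Xs n lam C p \<inter> Xs n lam C q)) \<le> (\<Sum>q\<in>paths n l. \<pi> p * \<pi> q) + \<pi> p * K"
    if p: "p \<in> paths n l" for p
  proof -
    have "(\<Sum>q\<in>paths n l. measure (WM n) (Xs n lam C p \<inter> Xs n lam C q))
       \<le> (\<Sum>q\<in>paths n l. if set p \<inter> set q = {} then \<pi> p * \<pi> q else \<pi> p * a ^ badr (set p) q)"
    proof (rule sum_mono)
      fix q assume q: "q \<in> paths n l"
      show "measure (WM n) (Xs n lam C p \<inter> Xs n lam C q) \<le> (if set p \<inter> set q = {} then \<pi> p * \<pi> q else \<pi> p * a ^ badr (set p) q)"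
        using pair_disj[OF n p q, of lam C] pair_gen[OF n p q T(1,2)] unfolding \<pi>_def a_def by auto
    qed
    also have "\<dots> = (\<Sum>q\<in>paths n l \<inter> {q. set p \<inter> set q = {}}. \<pi> p * \<pi> q)
        + (\<Sum>q\<in>paths n l \<inter> - {q. set p \<inter> set q = {}}. \<pi> p * a ^ badr (set p) q)"
      by (rule sum.If_cases[OF finite_paths])
    also have "(\<Sum>q\<in>paths n l \<inter> {q. set p \<inter> set q = {}}. \<pi> p * \<pi> q) \<le> (\<Sum>q\<in>paths n l. \<pi> p * \<pi> q)"
      by (rule sum_mono2[OF finite_paths]) (auto simp: pi0)
    also have "(\<Sum>q\<in>paths n l \<inter> - {q. set p \<inter> set q = {}}. \<pi> p * a ^ badr (set p) q)
        = \<pi> p * (\<Sum>q\<in>{q \<in> paths n l. set p \<inter> set q \<noteq> {}}. a ^ badr (set p) q)"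
      by (simp add: sum_distrib_left Int_def)
    also have "(\<Sum>q\<in>{q \<in> paths n l. set p \<inter> set q \<noteq> {}}. a ^ badr (set p) q) \<le> K"
      unfolding K_def by (rule count_bound[OF n(1) p a0 a1 aT T(2)])
    finally show ?thesis using pi0[of p] by (simp add: mult_left_mono)
  qed
  have "(\<Sum>p\<in>paths n l. \<Sum>q\<in>paths n l. measure (WM n) (Xs n lam C p \<inter> Xs n lam C q))
      \<le> (\<Sum>p\<in>paths n l. (\<Sum>q\<in>paths n l. \<pi> p * \<pi> q) + \<pi> p * K)"
    by (rule sum_mono) (rule row)
  also have "\<dots> = \<mu>\<^sup>2 + K * \<mu>"
    unfolding \<mu>_def \<pi>_def by (simp add: sum.distrib power2_eq_square sum_product sum_distrib_left mult.commute)
  finally show ?thesis unfolding K_def .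
qed

lemma one_minus_exp_ge: "0 \<le> (x::real) \<Longrightarrow> x \<le> 1 \<Longrightarrow> x / 2 \<le> 1 - exp (- x)"
proof -
  assume x: "0 \<le> x" "x \<le> 1"
  have "1 + x \<le> exp x" by (rule exp_ge_add_one_self)
  then have "exp (- x) \<le> 1 / (1 + x)" using x by (simp add: exp_minus field_simps)
  moreover have "x * x \<le> x" using x mult_left_le[of x x] by simp
  then have "x / 2 \<le> 1 - 1 / (1 + x)" using x by (simp add: field_simps)
  ultimately show ?thesis by linarith
qed

lemma card_paths_ge: "l + 1 \<le> n \<Longrightarrow> (real n - real l) ^ (l + 1) \<le> real (card (paths n l))"
proof -
  assume a: "l + 1 \<le> n"
  have "card (paths n l) = \<Prod>{n - (l + 1) + 1 .. n}"
    unfolding paths_def using card_lists_distinct_length_eq[of "{..<n}" "l + 1"] a by simp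
  also have "{n - (l + 1) + 1 .. n} = {n - l .. n}" using a by auto
  finally have "real (card (paths n l)) = (\<Prod>i\<in>{n - l .. n}. real i)" by simp
  moreover have "(\<Prod>i\<in>{n - l .. n}. real n - real l) \<le> (\<Prod>i\<in>{n - l .. n}. real i)"
    by (rule prod_mono) (use a in auto)
  moreover have "card {n - l .. n} = l + 1" using a by simp
  ultimately show ?thesis by simp
qed

lemma lower:
  assumes l: "0 < l" "2 * l \<le> n" and Tn: "T / real l \<le> real n"
  shows "real n * ((T / (4 * real l)) ^ l / 2) \<le> (\<Sum>p\<in>paths n l. measure (WM n) (Xs n lam C p))"
proof -
  define x where "x = T / real l / real n"
  have x0: "0 \<le> x" unfolding x_def using T by simp
  have x1: "x \<le> 1" unfolding x_def using Tn n l(1) by (simp add: divide_le_eq mult.commute)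
  have "(x / 2) ^ l \<le> (1 - exp (- x)) ^ l"
    by (rule power_mono[OF one_minus_exp_ge[OF x0 x1]]) (use x0 in simp)
  also have "(1 - exp (- x)) ^ l = (1 - exp (- (T / real l) / real n)) ^ l" unfolding x_def by simp
  finally have cx: "(x / 2) ^ l \<le> (1 - exp (- (T / real l) / real n)) ^ l" .
  have "(\<Sum>p\<in>paths n l. (x / 2) ^ l) \<le> (\<Sum>p\<in>paths n l. measure (WM n) (Xs n lam C p))"
    by (rule sum_mono) (use single_lower[OF n _ l(1) T(1,2)] cx in \<open>fastforce\<close>)
  moreover have "(\<Sum>p\<in>paths n l. (x / 2) ^ l) = real (card (paths n l)) * (x / 2) ^ l" by simp
  moreover have "(real n / 2) ^ (l + 1) \<le> real (card (paths n l))"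
  proof -
    have "(real n / 2) ^ (l + 1) \<le> (real n - real l) ^ (l + 1)"
      by (rule power_mono) (use l in auto)
    also have "\<dots> \<le> real (card (paths n l))" by (rule card_paths_ge) (use l in auto)
    finally show ?thesis .
  qed
  moreover have "(real n / 2) ^ (l + 1) * (x / 2) ^ l = real n * ((T / (4 * real l)) ^ l / 2)"
  proof -
    have "(real n / 2) ^ (l + 1) * (x / 2) ^ l = (real n / 2) * ((real n / 2) * (x / 2)) ^ l"
      by (simp add: power_mult_distrib[symmetric] del: power_mult_distrib)
    also have "(real n / 2) * (x / 2) = T / (4 * real l)" unfolding x_def using n by (simp add: field_simps)
    finally show ?thesis by simp
  qed
  moreover have "0 \<le> (x / 2) ^ l" using x0 by simp
  ultimately show ?thesis by (metis (no_types, lifting) mult_right_mono order_trans)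
qed

end


lemma final_n:
  fixes n :: nat and lam C :: real and l :: nat and T :: real
  assumes n: "2 \<le> n" and T: "T = lam * real l - C * sqrt (real l)" "0 < T" "T \<le> real n"
    and l: "0 < l" "2 * l \<le> n"
  defines "\<mu> \<equiv> integral\<^sup>L (WM n) (\<lambda>w. real (count_light n lam C l w))"
    and "f \<equiv> integral\<^sup>L (WM n) (\<lambda>w. (real (count_light n lam C l w))\<^sup>2)"
    and "K \<equiv> (max 1 T) ^ (l + 1) * (real l + 2) ^ (l + 1)"
  shows "\<mu>\<^sup>2 \<le> f \<and> f \<le> \<mu>\<^sup>2 + K * \<mu> \<and> real n * ((T / (4 * real l)) ^ l / 2) \<le> \<mu>
    \<and> measure (WM n) {w \<in> space (WM n). real (count_light n lam C l w) \<ge> 2 * \<mu>} \<le> K / \<mu>"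
proof -
  have n0: "0 < n" using n by simp
  have ne: "edges n \<noteq> {}"
  proof -
    have "{0, 1} \<in> edges n" using n unfolding edges_def by force
    then show ?thesis by blast
  qed
  interpret W: prob_space "WM n" by (rule ps_WM[OF n0])
  have Tl: "T / real l \<le> real n"
  proof -
    have "T * 1 \<le> T * real l" by (rule mult_left_mono) (use T(2) l(1) in auto)
    then have "T / real l \<le> T" using l(1) by (simp add: divide_le_eq)
    then show ?thesis using T(3) by linarith
  qed
  have mu: "\<mu> = (\<Sum>p\<in>paths n l. measure (WM n) (Xs n lam C p))" unfolding \<mu>_def by (rule EN[OF n0])
  have fe: "f = (\<Sum>p\<in>paths n l. \<Sum>q\<in>paths n l. measure (WM n) (Xs n lam C p \<inter> Xs n lam C q))"
    unfolding f_def by (rule EN2[OF n0])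
  have up: "f \<le> \<mu>\<^sup>2 + K * \<mu>" unfolding fe mu K_def
    using upper[OF n0 ne T(1) less_imp_le[OF T(2)] T(3)] by (simp add: mult.commute)
  have lo: "real n * ((T / (4 * real l)) ^ l / 2) \<le> \<mu>" unfolding mu
    by (rule lower[OF n0 ne T(1) less_imp_le[OF T(2)] T(3) l Tl])
  have var: "W.variance (\<lambda>w. real (count_light n lam C l w)) = f - \<mu>\<^sup>2"
    unfolding f_def \<mu>_def by (rule W.variance_eq[OF N_int[OF n0] N_sq_int[OF n0]])
  have vpos: "0 \<le> W.variance (\<lambda>w. real (count_light n lam C l w))" by (rule W.variance_positive)
  have lowf: "\<mu>\<^sup>2 \<le> f" using var vpos by simp
  have cpos: "0 < real n * ((T / (4 * real l)) ^ l / 2)" using T(2) l(1) n0 by simp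
  then have mupos: "0 < \<mu>" using lo by linarith
  have meas: "{w \<in> space (WM n). \<mu> \<le> \<bar>real (count_light n lam C l w) - \<mu>\<bar>} \<in> sets (WM n)"
  proof -
    have "(\<lambda>w. \<bar>real (count_light n lam C l w) - \<mu>\<bar>) \<in> borel_measurable (WM n)"
      by (intro borel_measurable_abs borel_measurable_diff N_meas[OF n0] borel_measurable_const)
    then show ?thesis by (rule borel_measurable_le[OF borel_measurable_const])
  qed
  have sub: "{w \<in> space (WM n). real (count_light n lam C l w) \<ge> 2 * \<mu>}
      \<subseteq> {w \<in> space (WM n). \<mu> \<le> \<bar>real (count_light n lam C l w) - \<mu>\<bar>}"
  proof
    fix w assume "w \<in> {w \<in> space (WM n). real (count_light n lam C l w) \<ge> 2 * \<mu>}"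
    then have w: "w \<in> space (WM n)" "2 * \<mu> \<le> real (count_light n lam C l w)" by simp_all
    then have "\<mu> \<le> \<bar>real (count_light n lam C l w) - \<mu>\<bar>" by linarith
    then show "w \<in> {w \<in> space (WM n). \<mu> \<le> \<bar>real (count_light n lam C l w) - \<mu>\<bar>}" using w(1) by simp
  qed
  have "measure (WM n) {w \<in> space (WM n). real (count_light n lam C l w) \<ge> 2 * \<mu>}
      \<le> measure (WM n) {w \<in> space (WM n). \<mu> \<le> \<bar>real (count_light n lam C l w) - \<mu>\<bar>}"
    by (rule W.finite_measure_mono[OF sub meas])
  also have "\<dots> \<le> W.variance (\<lambda>w. real (count_light n lam C l w)) / \<mu>\<^sup>2"
    unfolding \<mu>_def
    by (rule W.Chebyshev_inequality[OF N_meas[OF n0] N_sq_int[OF n0]]) (use mupos in \<open>simp add: \<mu>_def\<close>)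
  also have "\<dots> \<le> K / \<mu>"
  proof -
    have "W.variance (\<lambda>w. real (count_light n lam C l w)) \<le> K * \<mu>" using var up by simp
    then have "W.variance (\<lambda>w. real (count_light n lam C l w)) / \<mu>\<^sup>2 \<le> K * \<mu> / \<mu>\<^sup>2"
      by (rule divide_right_mono) simp
    also have "K * \<mu> / \<mu>\<^sup>2 = K / \<mu>" using mupos by (simp add: power2_eq_square)
    finally show ?thesis .
  qed
  finally show ?thesis using lowf up lo by simp
qed


lemma main_gen:
  fixes lam :: real and l :: nat
  assumes T: "0 < lam * real l - 1 * sqrt (real l)" and l: "0 < l"
  shows "(\<lambda>n. integral\<^sup>L (WM n) (\<lambda>w. (real (count_light n lam 1 l w))\<^sup>2))
           \<sim>[at_top] (\<lambda>n. (integral\<^sup>L (WM n) (\<lambda>w. real (count_light n lam 1 l w)))\<^sup>2)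
       \<and> ((\<lambda>n. measure (WM n) {w \<in> space (WM n). real (count_light n lam 1 l w)
                 \<ge> 2 * integral\<^sup>L (WM n) (\<lambda>w. real (count_light n lam 1 l w))}) \<longlongrightarrow> 0) at_top"
proof -
  define T where "T = lam * real l - 1 * sqrt (real l)"
  define K where "K = (max 1 T) ^ (l + 1) * (real l + 2) ^ (l + 1)"
  define c where "c = (T / (4 * real l)) ^ l / 2"
  define \<mu> where "\<mu> = (\<lambda>n. integral\<^sup>L (WM n) (\<lambda>w. real (count_light n lam 1 l w)))"
  define f where "f = (\<lambda>n. integral\<^sup>L (WM n) (\<lambda>w. (real (count_light n lam 1 l w))\<^sup>2))"
  define P where "P = (\<lambda>n. measure (WM n) {w \<in> space (WM n). real (count_light n lam 1 l w) \<ge> 2 * \<mu> n})"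
  have T0: "0 < T" using T unfolding T_def .
  have c0: "0 < c" unfolding c_def using T0 l by simp
  have K0: "0 \<le> K" unfolding K_def by simp
  have ev: "eventually (\<lambda>n. \<mu> n ^ 2 \<le> f n \<and> f n \<le> \<mu> n ^ 2 + K * \<mu> n \<and> real n * c \<le> \<mu> n
      \<and> P n \<le> K / \<mu> n \<and> 0 < real n) at_top"
  proof (rule eventually_at_top_linorder[THEN iffD2], intro exI allI impI)
    fix n :: nat assume n: "max 2 (max (2 * l) (nat \<lceil>T\<rceil>)) \<le> n"
    have Tn: "T \<le> real n"
    proof -
      have "T \<le> real (nat \<lceil>T\<rceil>)" by linarith
      also have "\<dots> \<le> real n" using n by simp
      finally show ?thesis .
    qed
    have "\<mu> n ^ 2 \<le> f n \<and> f n \<le> \<mu> n ^ 2 + K * \<mu> n \<and> real n * c \<le> \<mu> n \<and> P n \<le> K / \<mu> n"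
      unfolding \<mu>_def f_def P_def K_def c_def
      by (rule final_n[OF _ T_def T0 Tn l]) (use n in auto)
    then show "\<mu> n ^ 2 \<le> f n \<and> f n \<le> \<mu> n ^ 2 + K * \<mu> n \<and> real n * c \<le> \<mu> n
      \<and> P n \<le> K / \<mu> n \<and> 0 < real n" using n by simp
  qed
  have lim: "(\<lambda>n. K / c * inverse (real n)) \<longlonglongrightarrow> 0"
    by (intro tendsto_mult_right_zero tendsto_inverse_0_at_top filterlim_real_sequentially)
  have bnd: "K / \<mu> n \<le> K / c * inverse (real n)" if "real n * c \<le> \<mu> n" "0 < real n" for n
  proof -
    have "0 < real n * c" using that c0 by simp
    then have "K / \<mu> n \<le> K / (real n * c)" using that K0 by (intro divide_left_mono) auto
    also have "\<dots> = K / c * inverse (real n)" by (simp add: field_simps)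
    finally show ?thesis .
  qed
  have part1: "((\<lambda>n. f n / (\<mu> n)\<^sup>2) \<longlongrightarrow> 1) at_top"
  proof (rule tendsto_sandwich[where f = "\<lambda>_. 1" and h = "\<lambda>n. 1 + K / c * inverse (real n)"])
    show "eventually (\<lambda>n. 1 \<le> f n / (\<mu> n)\<^sup>2) at_top"
      using ev
    proof (rule eventually_mono)
      fix n assume h: "\<mu> n ^ 2 \<le> f n \<and> f n \<le> \<mu> n ^ 2 + K * \<mu> n \<and> real n * c \<le> \<mu> n \<and> P n \<le> K / \<mu> n \<and> 0 < real n"
      then have "0 < \<mu> n" using c0 by (smt (verit) mult_pos_pos)
      then show "1 \<le> f n / (\<mu> n)\<^sup>2" using h by simp
    qed
    show "eventually (\<lambda>n. f n / (\<mu> n)\<^sup>2 \<le> 1 + K / c * inverse (real n)) at_top"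
      using ev
    proof (rule eventually_mono)
      fix n assume h: "\<mu> n ^ 2 \<le> f n \<and> f n \<le> \<mu> n ^ 2 + K * \<mu> n \<and> real n * c \<le> \<mu> n \<and> P n \<le> K / \<mu> n \<and> 0 < real n"
      then have mp: "0 < \<mu> n" using c0 by (smt (verit) mult_pos_pos)
      have "f n / (\<mu> n)\<^sup>2 \<le> (\<mu> n ^ 2 + K * \<mu> n) / (\<mu> n)\<^sup>2"
        using h by (intro divide_right_mono) auto
      also have "\<dots> = 1 + K / \<mu> n" using mp by (simp add: field_simps power2_eq_square)
      also have "\<dots> \<le> 1 + K / c * inverse (real n)" using bnd h by simp
      finally show "f n / (\<mu> n)\<^sup>2 \<le> 1 + K / c * inverse (real n)" .
    qed
    show "((\<lambda>_. 1::real) \<longlongrightarrow> 1) at_top" by simp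
    show "((\<lambda>n. 1 + K / c * inverse (real n)) \<longlongrightarrow> 1) at_top"
      using tendsto_add[OF tendsto_const lim, of 1] by simp
  qed
  have part2: "(P \<longlongrightarrow> 0) at_top"
  proof (rule tendsto_sandwich[where f = "\<lambda>_. 0" and h = "\<lambda>n. K / c * inverse (real n)"])
    show "eventually (\<lambda>n. 0 \<le> P n) at_top" by (simp add: P_def)
    show "eventually (\<lambda>n. P n \<le> K / c * inverse (real n)) at_top"
      using ev
    proof (rule eventually_mono)
      fix n assume h: "\<mu> n ^ 2 \<le> f n \<and> f n \<le> \<mu> n ^ 2 + K * \<mu> n \<and> real n * c \<le> \<mu> n \<and> P n \<le> K / \<mu> n \<and> 0 < real n"
      then show "P n \<le> K / c * inverse (real n)" using bnd[of n] by linarith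
    qed
    show "((\<lambda>_. 0::real) \<longlongrightarrow> 0) at_top" by simp
    show "((\<lambda>n. K / c * inverse (real n)) \<longlongrightarrow> 0) at_top" by (rule lim)
  qed
  have "f \<sim>[at_top] (\<lambda>n. (\<mu> n)\<^sup>2)" by (rule asymp_equivI'[OF part1])
  then show ?thesis using part2 unfolding f_def \<mu>_def P_def by simp
qed

theorem mainTheorem3:
  fixes \<eta> \<eta>' :: real
  assumes "0 < \<eta>" and "\<eta> < \<eta>'" and "\<eta>' \<le> 1/8"
  shows "(\<lambda>n. integral\<^sup>L (WM n)
              (\<lambda>w. (real (count_light n (exp (-1) + \<eta>) 1 (nat \<lfloor>1/\<eta>'\<rfloor>) w))\<^sup>2))
           \<sim>[at_top]
         (\<lambda>n. (integral\<^sup>L (WM n)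
              (\<lambda>w. real (count_light n (exp (-1) + \<eta>) 1 (nat \<lfloor>1/\<eta>'\<rfloor>) w)))\<^sup>2)
       \<and> ((\<lambda>n. measure (WM n)
              {w \<in> space (WM n).
                 real (count_light n (exp (-1) + \<eta>) 1 (nat \<lfloor>1/\<eta>'\<rfloor>) w)
                 \<ge> 2 * integral\<^sup>L (WM n)
                     (\<lambda>w. real (count_light n (exp (-1) + \<eta>) 1 (nat \<lfloor>1/\<eta>'\<rfloor>) w))})
           \<longlongrightarrow> 0) at_top"
proof (rule main_gen)
  define l where "l = nat \<lfloor>1/\<eta>'\<rfloor>"
  have e0: "0 < \<eta>'" using assms by linarith
  have "8 \<le> 1 / \<eta>'" using assms e0 by (simp add: field_simps)
  then have "8 \<le> \<lfloor>1/\<eta>'\<rfloor>" by linarith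
  then have l8: "8 \<le> l" unfolding l_def by linarith
  then show "0 < nat \<lfloor>1/\<eta>'\<rfloor>" unfolding l_def[symmetric] by simp
  have "(272 / 100) \<le> sqrt (real l)"
  proof (rule real_le_rsqrt)
    show "(272 / 100 :: real)\<^sup>2 \<le> real l" using l8 by (simp add: power2_eq_square)
  qed
  then have es: "exp 1 \<le> sqrt (real l)" using e_less_272 by linarith
  have "exp 1 * sqrt (real l) \<le> sqrt (real l) * sqrt (real l)"
    by (rule mult_right_mono[OF es]) simp
  also have "\<dots> = real l" by simp
  finally have "sqrt (real l) \<le> exp (-1) * real l"
    by (simp add: exp_minus field_simps)
  moreover have "0 < \<eta> * real l" using assms l8 by simp
  ultimately show "0 < (exp (-1) + \<eta>) * real (nat \<lfloor>1/\<eta>'\<rfloor>) - 1 * sqrt (real (nat \<lfloor>1/\<eta>'\<rfloor>))"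
    unfolding l_def by (simp add: algebra_simps)
qed


end
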